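(* Fix $Y$, $q>0$, $\delta>0$, $\rho\in\mathbb R$, and let $(a^*,b^* )=(a^*(\beta),b^*(\beta))$ be the selected pair as a function of $\beta\in(0,1)$. Then: 1. If $q\rho/\delta<1$, then $b^*(\beta)>0$ for all sufficiently small $\beta$, and $b^*(\beta)\to\infty$ as $\beta\downarrow0$. 2. If $q\rho/\delta>1$, then $a^*(\beta)=b^*(\beta)=0$ for all sufficiently small $\beta>0$. 3. If $q\rho/\delta=1$ and $\psi_X'(0+)<0$, then $b^*(\beta)>0$ for all $\beta\in(0,1)$. Moreover, as $\beta\downarrow0$, $b^*(\beta)\to(\overline Z^{(q)})^{-1}(-\psi_X'(0+)/q)$ and $a^*(\beta)\to0$. 4. If $q\rho/\delta=1$ and $\psi_X'(0+)\ge0$, then $a^*(\beta)=b^*(\beta)=0$ for all $\beta\in(0,1)$.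
   Context: Let $Y$ be a spectrally positive Lévy process (not a subordinator) with Laplace exponent $\psi_Y(\theta)=\log\mathbb E[e^{-\theta Y_1}]$ and $\mathbb E[Y_1]=-\psi_Y'(0+)<\infty$. Let $q>0$, $\delta>0$, and $\psi_X(\theta)=\psi_Y(\theta)+\delta\theta$. The scale functions $\mathbb W^{(q)},W^{(q)}$ vanish on $(-\infty,0)$, are continuous and strictly increasing on $[0,\infty)$, and have Laplace transforms $1/(\psi_Y(\theta)-q)$ and $1/(\psi_X(\theta)-q)$. Let $\mathbb Z^{(q)}(x)=1+q\int_0^x\mathbb W^{(q)}$, $Z^{(q)}(x)=1+q\int_0^xW^{(q)}$, $\overline Z^{(q)}(x)=\int_0^xZ^{(q)}$ (strictly increasing from $0$ to $\infty$ on $[0,\infty)$), and $R^{(q)}(z)=\overline Z^{(q)}(z)+\psi_X'(0+)/q$. Let $\tilde r^{(q)}_c(z)=R^{(q)}(z)+\delta\int_c^z\mathbb W^{(q)}(z-y)Z^{(q)}(y)\,dy$. For $\beta\in(0,1)$ and $\rho\in\mathbb R$, let $\Gamma(a,b)=\delta\mathbb Z^{(q)}(a)-q\rho-q\beta\tilde r^{(q)}_{b-a}(b)$ for $0\le a\le b$. Selected pair: if $\Gamma(0,0)=\delta-q\rho-\beta\psi_X'(0+)\le0$, then $a^*=b^*=0$. Otherwise, $b^*>0$ is the unique root of $\min_{0\le a\le b^*}\Gamma(a,b^* )=0$, and $a^*$ is the unique minimizer of $a\mapsto\Gamma(a,b^* )$ on $[0,b^*]$. *)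

theory Defs
  imports "HOL-Probability.Probability"
begin

text \<open>A spectrally positive Levy process Y is determined (in law) by a triplet
  (gam, s, Lm): linear coefficient gam, Gaussian variance s \<ge> 0, and a Levy measure Lm
  carried by (0,\<infinity>) with \<integral> min(1,z^2) Lm(dz) < \<infinity>.  Finiteness of E[Y_1] is
  \<integral>_{[1,\<infinity>)} z Lm(dz) < \<infinity>.\<close>

definition spos_levy_triplet :: "real \<Rightarrow> real \<Rightarrow> real measure \<Rightarrow> bool" where
  "spos_levy_triplet gam s Lm \<longleftrightarrow>
     s \<ge> 0 \<and> sets Lm = sets borel \<and> emeasure Lm {..0} = 0 \<and>
     (\<integral>\<^sup>+ z. ennreal (min 1 (z^2)) \<partial>Lm) < \<infinity>"

definition finite_mean_triplet :: "real measure \<Rightarrow> bool" where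
  "finite_mean_triplet Lm \<longleftrightarrow> (\<integral>\<^sup>+ z. ennreal (z * indicator {1..} z) \<partial>Lm) < \<infinity>"

text \<open>Y is a subordinator iff it has bounded variation (s = 0 and \<integral>_{(0,1)} z Lm(dz) < \<infinity>)
  and nonnegative drift gam - \<integral>_{(0,1)} z Lm(dz).\<close>

definition subordinator_triplet :: "real \<Rightarrow> real \<Rightarrow> real measure \<Rightarrow> bool" where
  "subordinator_triplet gam s Lm \<longleftrightarrow>
     s = 0 \<and> (\<integral>\<^sup>+ z. ennreal (z * indicator {0<..<1} z) \<partial>Lm) < \<infinity> \<and>
     gam - (\<integral> z. z * indicator {0<..<1} z \<partial>Lm) \<ge> 0"

text \<open>Laplace exponent psi_Y(\<theta>) = log E[exp(-\<theta> Y_1)], \<theta> \<ge> 0.\<close>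

definition levy_psi :: "real \<Rightarrow> real \<Rightarrow> real measure \<Rightarrow> real \<Rightarrow> real" where
  "levy_psi gam s Lm \<theta> =
     - gam * \<theta> + s * \<theta>^2 / 2 +
     (\<integral> z. exp (- \<theta> * z) - 1 + \<theta> * z * indicator {..<1} z \<partial>Lm)"

definition right_deriv0 :: "(real \<Rightarrow> real) \<Rightarrow> real" where
  "right_deriv0 f = (THE D. (f has_real_derivative D) (at_right 0))"

definition is_scale_function :: "(real \<Rightarrow> real) \<Rightarrow> real \<Rightarrow> (real \<Rightarrow> real) \<Rightarrow> bool" where
  "is_scale_function psi q W \<longleftrightarrow>
     (\<forall>x<0. W x = 0) \<and> continuous_on {0..} W \<and> strict_mono_on {0..} W \<and>
     (\<forall>\<theta>>0. psi \<theta> > q \<longrightarrow>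
        ((\<lambda>x. exp (- \<theta> * x) * W x) has_integral (1 / (psi \<theta> - q))) {0..})"

definition scaleZ :: "real \<Rightarrow> (real \<Rightarrow> real) \<Rightarrow> real \<Rightarrow> real" where
  "scaleZ q W x = 1 + q * integral {0..x} W"

definition scaleZbar :: "real \<Rightarrow> (real \<Rightarrow> real) \<Rightarrow> real \<Rightarrow> real" where
  "scaleZbar q W x = integral {0..x} (scaleZ q W)"

text \<open>Parameters: WW = \<bbbW>^(q) (of Y), W = W^(q) (of X), d = psi_X'(0+).\<close>

definition Rfun :: "real \<Rightarrow> (real \<Rightarrow> real) \<Rightarrow> real \<Rightarrow> real \<Rightarrow> real" where
  "Rfun q W d z = scaleZbar q W z + d / q"

definition rtilde :: "real \<Rightarrow> real \<Rightarrow> (real \<Rightarrow> real) \<Rightarrow> (real \<Rightarrow> real) \<Rightarrow> real \<Rightarrow> real \<Rightarrow> real \<Rightarrow> real" where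
  "rtilde q \<delta> WW W d c z =
     Rfun q W d z + \<delta> * integral {c..z} (\<lambda>y. WW (z - y) * scaleZ q W y)"

definition Gam :: "real \<Rightarrow> real \<Rightarrow> real \<Rightarrow> (real \<Rightarrow> real) \<Rightarrow> (real \<Rightarrow> real) \<Rightarrow> real \<Rightarrow> real
                    \<Rightarrow> real \<Rightarrow> real \<Rightarrow> real" where
  "Gam q \<delta> \<rho> WW W d \<beta> a b =
     \<delta> * scaleZ q WW a - q * \<rho> - q * \<beta> * rtilde q \<delta> WW W d (b - a) b"

definition bstar :: "real \<Rightarrow> real \<Rightarrow> real \<Rightarrow> (real \<Rightarrow> real) \<Rightarrow> (real \<Rightarrow> real) \<Rightarrow> real \<Rightarrow> real \<Rightarrow> real" where
  "bstar q \<delta> \<rho> WW W d \<beta> =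
     (if Gam q \<delta> \<rho> WW W d \<beta> 0 0 \<le> 0 then 0
      else (THE b. b > 0 \<and> (INF a\<in>{0..b}. Gam q \<delta> \<rho> WW W d \<beta> a b) = 0))"

definition astar :: "real \<Rightarrow> real \<Rightarrow> real \<Rightarrow> (real \<Rightarrow> real) \<Rightarrow> (real \<Rightarrow> real) \<Rightarrow> real \<Rightarrow> real \<Rightarrow> real" where
  "astar q \<delta> \<rho> WW W d \<beta> =
     (if Gam q \<delta> \<rho> WW W d \<beta> 0 0 \<le> 0 then 0
      else (let b = bstar q \<delta> \<rho> WW W d \<beta> in
            THE a. a \<in> {0..b} \<and>
              (\<forall>a'\<in>{0..b}. Gam q \<delta> \<rho> WW W d \<beta> a b \<le> Gam q \<delta> \<rho> WW W d \<beta> a' b)))"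

end

theory Submission
  imports Defs
begin


definition goodW :: "(real \<Rightarrow> real) \<Rightarrow> bool" where
  "goodW W \<longleftrightarrow> continuous_on {0..} W \<and> (\<forall>x\<ge>0. 0 \<le> W x) \<and> (\<forall>x>0. 0 < W x)
     \<and> strict_mono_on {0..} W"

lemma goodW_int: "goodW W \<Longrightarrow> 0 \<le> a \<Longrightarrow> W integrable_on {a..b}"
  unfolding goodW_def
  by (rule integrable_continuous_real) (auto intro: continuous_on_subset)

lemma goodW_cont: "goodW W \<Longrightarrow> 0 \<le> a \<Longrightarrow> continuous_on {a..b} W"
  unfolding goodW_def by (auto intro: continuous_on_subset)

lemma scaleZ_nonpos: "y \<le> 0 \<Longrightarrow> scaleZ q W y = 1"
  unfolding scaleZ_def by (cases "y = 0") auto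

lemma scaleZ_diff:
  assumes "goodW W" "0 \<le> x" "x \<le> y"
  shows "scaleZ q W y - scaleZ q W x = q * integral {x..y} W"
proof -
  have "integral {0..x} W + integral {x..y} W = integral {0..y} W"
    by (rule Henstock_Kurzweil_Integration.integral_combine) (use assms goodW_int in auto)
  then show ?thesis unfolding scaleZ_def by (simp add: algebra_simps flip: distrib_left)
qed

lemma int_pos:
  assumes "goodW W" "0 \<le> x" "x < y"
  shows "integral {x..y} W > 0"
proof -
  define m where "m = (x + y) / 2"
  have "integral {x..m} W + integral {m..y} W = integral {x..y} W"
    by (rule Henstock_Kurzweil_Integration.integral_combine) (use assms goodW_int in \<open>auto simp: m_def\<close>)
  moreover have "integral {x..m} W \<ge> 0"
    using assms by (intro integral_nonneg goodW_int) (auto simp: goodW_def m_def)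
  moreover have "integral {m..y} W \<ge> integral {m..y} (\<lambda>_. W m)"
  proof (rule integral_le)
    show "W integrable_on {m..y}" using assms by (intro goodW_int) (auto simp: m_def)
    fix t assume "t \<in> {m..y}"
    then have "m \<le> t" "0 \<le> m" using assms by (auto simp: m_def)
    then show "W m \<le> W t" using assms(1) unfolding goodW_def strict_mono_on_def
      by (cases "t = m") (auto intro!: less_imp_le)
  qed auto
  moreover have "integral {m..y} (\<lambda>_. W m) = (y - m) * W m"
    using assms by (simp add: m_def)
  moreover have "(y - m) * W m > 0" using assms by (auto simp: m_def goodW_def)
  ultimately show ?thesis by linarith
qed

lemma int_nonneg:
  assumes "goodW W" "0 \<le> x"
  shows "integral {x..y} W \<ge> 0"
  using assms by (intro integral_nonneg goodW_int) (auto simp: goodW_def)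

lemma scaleZ_strict:
  assumes "goodW W" "q > 0" "0 \<le> x" "x < y"
  shows "scaleZ q W x < scaleZ q W y"
  using scaleZ_diff[OF assms(1,3) less_imp_le[OF assms(4)], of q] int_pos[OF assms(1,3,4)] assms(2,4)
  by (smt (verit) mult_pos_pos)

lemma scaleZ_mono:
  assumes "goodW W" "q > 0" "0 \<le> x" "x \<le> y"
  shows "scaleZ q W x \<le> scaleZ q W y"
  using scaleZ_strict[OF assms(1,2,3), of y] assms(4) by (cases "x = y") auto

lemma scaleZ_ge1:
  assumes "goodW W" "q > 0"
  shows "scaleZ q W y \<ge> 1"
proof (cases "y \<le> 0")
  case True then show ?thesis by (simp add: scaleZ_nonpos)
next
  case False then show ?thesis using scaleZ_mono[OF assms, of 0 y] by (simp add: scaleZ_nonpos)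
qed

lemma cont_on_ray:
  fixes f :: "real \<Rightarrow> real"
  assumes "\<And>b. b \<ge> a \<Longrightarrow> continuous_on {a..b} f"
  shows "continuous_on {a..} f"
  unfolding continuous_on_eq_continuous_within
proof
  fix x assume x: "x \<in> {a..}"
  have "continuous (at x within {a..x+1}) f"
    using assms[of "x+1"] x by (auto simp: continuous_on_eq_continuous_within)
  moreover have "at x within {a..} = at x within {a..x+1}"
    by (rule at_within_nhd[of x "{..<x+1}"]) (use x in auto)
  ultimately show "continuous (at x within {a..}) f" by (simp add: continuous_within)
qed

lemma scaleZ_cont:
  assumes "goodW W"
  shows "continuous_on {0..} (scaleZ q W)"
proof -
  have "continuous_on {0..b} (scaleZ q W)" if "b \<ge> 0" for b
    unfolding scaleZ_def
    by (intro continuous_intros indefinite_integral_continuous_1 goodW_int[OF assms]) auto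
  then show ?thesis by (intro cont_on_ray) auto
qed




lemma scaleZbar_cont:
  assumes "goodW W"
  shows "continuous_on {0..} (scaleZbar q W)"
proof -
  have "continuous_on {0..b} (scaleZbar q W)" if "b \<ge> 0" for b
    unfolding scaleZbar_def
    by (intro indefinite_integral_continuous_1 integrable_continuous_real
        continuous_on_subset[OF scaleZ_cont[OF assms]]) auto
  then show ?thesis by (intro cont_on_ray) auto
qed

lemma scaleZ_int: "goodW W \<Longrightarrow> 0 \<le> a \<Longrightarrow> scaleZ q W integrable_on {a..b}"
  by (intro integrable_continuous_real continuous_on_subset[OF scaleZ_cont]) auto

lemma scaleZbar_diff:
  assumes "goodW W" "0 \<le> x" "x \<le> y"
  shows "scaleZbar q W y - scaleZbar q W x = integral {x..y} (scaleZ q W)"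
proof -
  have "integral {0..x} (scaleZ q W) + integral {x..y} (scaleZ q W) = integral {0..y} (scaleZ q W)"
    by (rule Henstock_Kurzweil_Integration.integral_combine) (use assms scaleZ_int in auto)
  then show ?thesis unfolding scaleZbar_def by simp
qed

lemma scaleZbar_ge:
  assumes "goodW W" "q > 0" "0 \<le> x" "x \<le> y"
  shows "scaleZbar q W y - scaleZbar q W x \<ge> y - x"
proof -
  have "integral {x..y} (\<lambda>_. 1::real) \<le> integral {x..y} (scaleZ q W)"
    by (rule integral_le) (use assms scaleZ_int scaleZ_ge1 in auto)
  then show ?thesis using scaleZbar_diff[OF assms(1,3,4), of q] assms by simp
qed

lemma scaleZbar_0[simp]: "scaleZbar q W 0 = 0"
  unfolding scaleZbar_def by simp

lemma scaleZ_0[simp]: "scaleZ q W 0 = 1"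
  unfolding scaleZ_def by simp

locale core =
  fixes q \<delta> \<rho> d :: real and WW W :: "real \<Rightarrow> real"
  assumes q: "q > 0" and \<delta>: "\<delta> > 0" and gW: "goodW W" and gWW: "goodW WW"
begin

abbreviation "Z \<equiv> scaleZ q W"
abbreviation "ZY \<equiv> scaleZ q WW"
abbreviation "Zb \<equiv> scaleZbar q W"
abbreviation "G \<beta> a b \<equiv> Gam q \<delta> \<rho> WW W d \<beta> a b"

definition Jf :: "real \<Rightarrow> real \<Rightarrow> real" where
  "Jf a b = integral {0..1} (\<lambda>s. a * (WW (a - a * s) * Z (b - a + a * s)))"

definition GF :: "real \<Rightarrow> real \<times> real \<Rightarrow> real" where
  "GF \<beta> p = \<delta> * ZY (fst p) - q * \<rho> - q * \<beta> * (Zb (snd p) + d / q + \<delta> * Jf (fst p) (snd p))"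

definition U :: "(real \<times> real) set" where "U = {p. 0 \<le> fst p \<and> fst p \<le> snd p}"

lemma Gam_unfold: "G \<beta> a b = \<delta> * ZY a - q * \<rho> - q * \<beta> *
   (Zb b + d / q + \<delta> * integral {b - a..b} (\<lambda>y. WW (b - y) * Z y))"
  unfolding Gam_def rtilde_def Rfun_def by simp

lemma Gam00: "G \<beta> 0 0 = \<delta> - q * \<rho> - \<beta> * d"
  unfolding Gam_unfold using q by (simp add: algebra_simps)

lemma fb_cont:
  assumes "0 \<le> c" "c \<le> b"
  shows "continuous_on {c..b} (\<lambda>y. WW (b - y) * Z y)"
proof -
  have "continuous_on {c..b} (\<lambda>y. WW (b - y))"
    by (rule continuous_on_compose2[of "{0..}" WW]) (use gWW in \<open>auto simp: goodW_def intro!: continuous_intros\<close>)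
  moreover have "continuous_on {c..b} Z"
    by (rule continuous_on_subset[OF scaleZ_cont[OF gW]]) (use assms in auto)
  ultimately show ?thesis by (intro continuous_intros)
qed

lemma J_subst:
  assumes "0 \<le> a" "a \<le> b"
  shows "integral {b - a..b} (\<lambda>y. WW (b - y) * Z y) = Jf a b"
proof -
  have "((\<lambda>s. a *\<^sub>R (\<lambda>y. WW (b - y) * Z y) (b - a + a * s)) has_integral
      integral {b - a + a * 0..b - a + a * 1} (\<lambda>y. WW (b - y) * Z y)) {0..1}"
  proof (rule has_integral_substitution[where c="b-a" and d=b])
    show "(\<lambda>s. b - a + a * s) ` {0..1} \<subseteq> {b - a..b}"
      using assms by (auto intro!: mult_left_le)
    show "continuous_on {b - a..b} (\<lambda>y. WW (b - y) * Z y)"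
      using assms by (intro fb_cont) auto
    show "((\<lambda>s. b - a + a * s) has_real_derivative a) (at x within {0..1})" for x
      by (auto intro!: derivative_eq_intros)
  qed (use assms in auto)
  then have "((\<lambda>s. a * (WW (a - a * s) * Z (b - a + a * s))) has_integral
      integral {b - a..b} (\<lambda>y. WW (b - y) * Z y)) {0..1}"
    by (simp add: algebra_simps)
  then show ?thesis unfolding Jf_def by (rule integral_unique[symmetric])
qed

lemma Gam_GF:
  assumes "0 \<le> a" "a \<le> b"
  shows "G \<beta> a b = GF \<beta> (a, b)"
  unfolding Gam_unfold GF_def using J_subst[OF assms] by simp

lemma Jf_cont: "continuous_on U (\<lambda>p. Jf (fst p) (snd p))"
proof -
  have "continuous_on (U \<times> cbox 0 1)
     (\<lambda>(p, s). fst p * (WW (fst p - fst p * s) * Z (snd p - fst p + fst p * s)))"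
  proof -
    have sub1: "(\<lambda>x. fst (fst x) - fst (fst x) * snd x) ` (U \<times> cbox 0 1) \<subseteq> {0..}"
      by (auto simp: U_def cbox_interval intro!: mult_left_le)
    have sub2: "(\<lambda>x. snd (fst x) - fst (fst x) + fst (fst x) * snd x) ` (U \<times> cbox 0 1) \<subseteq> {0..}"
      by (auto simp: U_def cbox_interval)
    have c1: "continuous_on (U \<times> cbox 0 1) (\<lambda>x. WW (fst (fst x) - fst (fst x) * snd x))"
      by (rule continuous_on_compose2[OF _ _ sub1]) (use gWW in \<open>auto simp: goodW_def intro!: continuous_intros\<close>)
    have c2: "continuous_on (U \<times> cbox 0 1) (\<lambda>x. Z (snd (fst x) - fst (fst x) + fst (fst x) * snd x))"
      by (intro continuous_on_compose2[OF scaleZ_cont[OF gW] _ sub2] continuous_intros)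
    show ?thesis unfolding case_prod_beta
      by (intro continuous_intros c1 c2)
  qed
  then have "continuous_on U (\<lambda>p. integral (cbox 0 1) (\<lambda>s. fst p * (WW (fst p - fst p * s) * Z (snd p - fst p + fst p * s))))"
    by (rule integral_continuous_on_param)
  then show ?thesis unfolding Jf_def by (simp add: cbox_interval)
qed

lemma GF_cont: "continuous_on U (GF \<beta>)"
proof -
  have "continuous_on U (\<lambda>p. ZY (fst p))"
    by (rule continuous_on_compose2[OF scaleZ_cont[OF gWW]]) (auto simp: U_def intro!: continuous_intros)
  moreover have "continuous_on U (\<lambda>p. Zb (snd p))"
    by (rule continuous_on_compose2[OF scaleZbar_cont[OF gW]]) (auto simp: U_def intro!: continuous_intros)
  ultimately show ?thesis unfolding GF_def
    by (intro continuous_intros Jf_cont)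
qed

end



context core begin

lemma G_deriv:
  assumes "0 < a" "a < b"
  shows "((\<lambda>x. G \<beta> x b) has_real_derivative (q * \<delta> * WW a * (1 - \<beta> * Z (b - a)))) (at a)"
proof -
  define fb where "fb y = WW (b - y) * Z y" for y
  define K where "K x = integral {0..x} fb" for x
  define H where "H x = (\<delta> - q * \<rho> - q * \<beta> * (Zb b + d / q + \<delta> * K b)) + (\<delta> * q) * integral {0..x} WW + (q * \<beta> * \<delta>) * K (b - x)" for x
  have fbc: "continuous_on {0..b} fb" unfolding fb_def using assms by (intro fb_cont) auto
  have eq: "G \<beta> x b = H x" if "x \<in> {0<..<b}" for x
  proof -
    have "K (b - x) + integral {b - x..b} fb = K b"
      unfolding K_def
      by (rule Henstock_Kurzweil_Integration.integral_combine) (use that fbc integrable_continuous_real in auto)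
    then have ie: "integral {b - x..b} (\<lambda>y. WW (b - y) * Z y) = K b - K (b - x)"
      unfolding fb_def by linarith
    show ?thesis unfolding Gam_unfold H_def scaleZ_def[of q WW] ie by (simp add: algebra_simps)
  qed
  have d1: "((\<lambda>x. integral {0..x} WW) has_real_derivative WW a) (at a)"
  proof -
    have "((\<lambda>x. integral {0..x} WW) has_real_derivative WW a) (at a within {0..b})"
      by (rule integral_has_real_derivative) (use assms goodW_cont[OF gWW] in auto)
    then show ?thesis using assms by (simp add: at_within_Icc_at)
  qed
  have dK: "(K has_real_derivative fb (b - a)) (at (b - a))"
  proof -
    have "(K has_real_derivative fb (b - a)) (at (b - a) within {0..b})"
      unfolding K_def by (rule integral_has_real_derivative) (use assms fbc in auto)
    then show ?thesis using assms by (simp add: at_within_Icc_at)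
  qed
  have d2: "((\<lambda>x. K (b - x)) has_real_derivative fb (b - a) * (-1)) (at a)"
    by (rule DERIV_chain2[where f=K and g="\<lambda>x. b - x", OF dK]) (auto intro!: derivative_eq_intros)
  have "(H has_real_derivative (0 + (\<delta> * q) * WW a + (q * \<beta> * \<delta>) * (fb (b - a) * (-1)))) (at a)"
    unfolding H_def by (intro DERIV_add DERIV_cmult DERIV_const d1 d2)
  then have "(H has_real_derivative (q * \<delta> * WW a * (1 - \<beta> * Z (b - a)))) (at a)"
    by (simp add: fb_def algebra_simps)
  then show ?thesis
    by (rule has_field_derivative_transform_within_open[where S="{0<..<b}"]) (use assms eq in auto)
qed

lemma G_cont_a:
  assumes "0 \<le> a1" "a2 \<le> b"
  shows "continuous_on {a1..a2} (\<lambda>x. G \<beta> x b)"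
proof -
  have "continuous_on {a1..a2} (\<lambda>x. GF \<beta> (x, b))"
    by (rule continuous_on_compose2[OF GF_cont]) (use assms in \<open>auto simp: U_def intro!: continuous_intros\<close>)
  then show ?thesis
    by (rule continuous_on_cong[THEN iffD1, rotated 2]) (use assms Gam_GF in auto)
qed

lemma G_incr:
  assumes "0 \<le> a1" "a1 < a2" "a2 \<le> b" "\<And>x. a1 < x \<Longrightarrow> x < a2 \<Longrightarrow> \<beta> * Z (b - x) < 1"
  shows "G \<beta> a1 b < G \<beta> a2 b"
proof (rule DERIV_pos_imp_increasing_open[OF assms(2) _ G_cont_a[OF assms(1,3)]])
  fix x assume x: "a1 < x" "x < a2"
  have "WW x > 0" using gWW x assms by (auto simp: goodW_def)
  moreover have "1 - \<beta> * Z (b - x) > 0" using assms(4)[OF x] by simp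
  ultimately show "\<exists>y. ((\<lambda>x. G \<beta> x b) has_real_derivative y) (at x) \<and> 0 < y"
    using G_deriv[of x b \<beta>] x assms q \<delta>
    by (intro exI[of _ "q * \<delta> * WW x * (1 - \<beta> * Z (b - x))"] conjI) auto
qed

lemma G_decr:
  assumes "0 \<le> a1" "a1 < a2" "a2 \<le> b" "\<And>x. a1 < x \<Longrightarrow> x < a2 \<Longrightarrow> \<beta> * Z (b - x) > 1"
  shows "G \<beta> a1 b > G \<beta> a2 b"
proof (rule DERIV_neg_imp_decreasing_open[OF assms(2) _ G_cont_a[OF assms(1,3)]])
  fix x assume x: "a1 < x" "x < a2"
  have "WW x > 0" using gWW x assms by (auto simp: goodW_def)
  moreover have "1 - \<beta> * Z (b - x) < 0" using assms(4)[OF x] by simp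
  ultimately show "\<exists>y. ((\<lambda>x. G \<beta> x b) has_real_derivative y) (at x) \<and> y < 0"
    using G_deriv[of x b \<beta>] x assms q \<delta>
    by (intro exI[of _ "q * \<delta> * WW x * (1 - \<beta> * Z (b - x))"] conjI) (auto simp: mult_pos_neg)
qed

lemma Z_unbounded: "\<exists>y\<ge>0. Z y \<ge> M"
proof -
  have W1: "W 1 > 0" using gW by (auto simp: goodW_def)
  define y where "y = 1 + max 0 M / (q * W 1)"
  have y1: "y \<ge> 1" using q W1 by (auto simp: y_def)
  have "integral {1..y} (\<lambda>_. W 1) \<le> integral {1..y} W"
  proof (rule integral_le)
    fix t assume "t \<in> {1..y}"
    then show "W 1 \<le> W t" using gW unfolding goodW_def strict_mono_on_def
      by (cases "t = 1") (auto intro!: less_imp_le)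
  qed (use goodW_int[OF gW] in auto)
  then have "(y - 1) * W 1 \<le> integral {1..y} W" using y1 by simp
  moreover have "Z y - Z 1 = q * integral {1..y} W" by (rule scaleZ_diff[OF gW]) (use y1 in auto)
  moreover have "Z 1 \<ge> 1" by (rule scaleZ_ge1[OF gW q])
  moreover have "q * ((y - 1) * W 1) = max 0 M" using q W1 by (simp add: y_def)
  ultimately have "Z y \<ge> 1 + max 0 M"
    using q by (smt (verit) mult_left_mono)
  then show ?thesis using y1 by (intro exI[of _ y]) auto
qed

lemma z0_exists:
  assumes "0 < \<beta>" "\<beta> < 1"
  obtains z0 where "z0 > 0" "Z z0 = 1 / \<beta>"
proof -
  obtain y where y: "y \<ge> 0" "Z y \<ge> 1 / \<beta>" using Z_unbounded by blast
  have "Z 0 \<le> 1 / \<beta>" using assms by simp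
  then obtain z where z: "0 \<le> z" "z \<le> y" "Z z = 1 / \<beta>"
    using IVT'[of Z 0 "1/\<beta>" y] y continuous_on_subset[OF scaleZ_cont[OF gW], of "{0..y}"] by auto
  have "z \<noteq> 0" using z assms by auto
  then show ?thesis using z by (intro that[of z]) auto
qed

lemma Zlt_iff:
  assumes "0 < \<beta>" "Z z0 = 1 / \<beta>" "0 \<le> z0" "0 \<le> t"
  shows "\<beta> * Z t < 1 \<longleftrightarrow> t < z0" and "\<beta> * Z t > 1 \<longleftrightarrow> t > z0"
proof -
  have bz: "\<beta> * Z z0 = 1" using assms by simp
  have "\<beta> * Z t < 1 \<longleftrightarrow> Z t < Z z0" using assms(1) bz by (metis mult_less_cancel_left_pos)
  also have "\<dots> \<longleftrightarrow> t < z0"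
    using scaleZ_strict[OF gW q, of t z0] scaleZ_strict[OF gW q, of z0 t] assms
    by (metis less_asym linorder_neqE_linordered_idom)
  finally show "\<beta> * Z t < 1 \<longleftrightarrow> t < z0" .
  have "\<beta> * Z t > 1 \<longleftrightarrow> Z t > Z z0" using assms(1) bz by (metis mult_less_cancel_left_pos)
  also have "\<dots> \<longleftrightarrow> t > z0"
    using scaleZ_strict[OF gW q, of t z0] scaleZ_strict[OF gW q, of z0 t] assms
    by (metis less_asym linorder_neqE_linordered_idom)
  finally show "\<beta> * Z t > 1 \<longleftrightarrow> t > z0" .
qed

lemma G_min:
  assumes "0 < \<beta>" "Z z0 = 1 / \<beta>" "0 \<le> z0" "a \<in> {0..b}" "a \<noteq> max 0 (b - z0)"
  shows "G \<beta> (max 0 (b - z0)) b < G \<beta> a b"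
proof (cases "a > max 0 (b - z0)")
  case True
  show ?thesis
  proof (rule G_incr)
    fix x assume "max 0 (b - z0) < x" "x < a"
    then show "\<beta> * Z (b - x) < 1" using Zlt_iff(1)[OF assms(1-3), of "b - x"] assms by auto
  qed (use True assms in auto)
next
  case False
  then have lt: "a < b - z0" "0 < b - z0" using assms by auto
  show ?thesis
  proof -
    have "G \<beta> a b > G \<beta> (b - z0) b"
    proof (rule G_decr)
      fix x assume "a < x" "x < b - z0"
      then show "\<beta> * Z (b - x) > 1" using Zlt_iff(2)[OF assms(1-3), of "b - x"] assms by auto
    qed (use lt assms in auto)
    then show ?thesis using lt by simp
  qed
qed

end



context core begin

lemma Jf_integrable:
  assumes "0 \<le> a" "a \<le> b"
  shows "(\<lambda>s. a * (WW (a - a * s) * Z (b - a + a * s))) integrable_on {0..1}"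
proof (rule integrable_continuous_real)
  have sub1: "(\<lambda>s. a - a * s) ` {0..1} \<subseteq> {0..}" using assms by (auto intro!: mult_left_le)
  have sub2: "(\<lambda>s. b - a + a * s) ` {0..1} \<subseteq> {0..}" using assms by auto
  have c1: "continuous_on {0..1} (\<lambda>s. WW (a - a * s))"
    by (rule continuous_on_compose2[OF _ _ sub1]) (use gWW in \<open>auto simp: goodW_def intro!: continuous_intros\<close>)
  have c2: "continuous_on {0..1} (\<lambda>s. Z (b - a + a * s))"
    by (intro continuous_on_compose2[OF scaleZ_cont[OF gW] _ sub2] continuous_intros)
  show "continuous_on {0..1} (\<lambda>s. a * (WW (a - a * s) * Z (b - a + a * s)))"
    by (intro continuous_intros c1 c2)
qed

lemma Jf_mono:
  assumes "0 \<le> a" "a \<le> b" "b \<le> b'"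
  shows "Jf a b \<le> Jf a b'"
  unfolding Jf_def
proof (rule integral_le[OF Jf_integrable Jf_integrable])
  fix s :: real assume s: "s \<in> {0..1}"
  have "a * s \<le> a" using s assms by (auto intro!: mult_left_le)
  then have "WW (a - a * s) \<ge> 0" using gWW by (auto simp: goodW_def)
  moreover have "Z (b - a + a * s) \<le> Z (b' - a + a * s)"
    using s assms by (intro scaleZ_mono[OF gW q]) auto
  ultimately show "a * (WW (a - a * s) * Z (b - a + a * s)) \<le> a * (WW (a - a * s) * Z (b' - a + a * s))"
    using assms by (intro mult_left_mono) auto
qed (use assms in auto)

lemma G_bdecr:
  assumes "0 < \<beta>" "0 \<le> a" "a \<le> b" "b < b'"
  shows "G \<beta> a b' < G \<beta> a b"
proof -
  have "Zb b' - Zb b \<ge> b' - b" using assms by (intro scaleZbar_ge[OF gW q]) auto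
  moreover have "Jf a b \<le> Jf a b'" using assms by (intro Jf_mono) auto
  ultimately have "Zb b + d / q + \<delta> * Jf a b < Zb b' + d / q + \<delta> * Jf a b'"
    using assms \<delta> by (smt (verit) mult_left_mono)
  then have "q * \<beta> * (Zb b + d / q + \<delta> * Jf a b) < q * \<beta> * (Zb b' + d / q + \<delta> * Jf a b')"
    using assms q by (intro mult_strict_left_mono) auto
  then show ?thesis using assms by (simp add: Gam_GF GF_def)
qed

definition mfun :: "real \<Rightarrow> real \<Rightarrow> real \<Rightarrow> real" where
  "mfun \<beta> z0 b = G \<beta> (max 0 (b - z0)) b"

lemma mfun_le:
  assumes "0 < \<beta>" "Z z0 = 1 / \<beta>" "0 \<le> z0" "a \<in> {0..b}"
  shows "mfun \<beta> z0 b \<le> G \<beta> a b"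
  using G_min[OF assms(1-4)] unfolding mfun_def by (cases "a = max 0 (b - z0)") auto

lemma mfun_decr:
  assumes "0 < \<beta>" "Z z0 = 1 / \<beta>" "0 \<le> z0" "0 \<le> b" "b < b'"
  shows "mfun \<beta> z0 b' < mfun \<beta> z0 b"
proof -
  have "mfun \<beta> z0 b' \<le> G \<beta> (max 0 (b - z0)) b'"
    using assms by (intro mfun_le) auto
  also have "\<dots> < mfun \<beta> z0 b"
    unfolding mfun_def using assms by (intro G_bdecr) auto
  finally show ?thesis .
qed

lemma mfun_cont:
  assumes "0 \<le> z0"
  shows "continuous_on {0..} (mfun \<beta> z0)"
proof -
  have "continuous_on {0..} (\<lambda>b. GF \<beta> (max 0 (b - z0), b))"
    by (rule continuous_on_compose2[OF GF_cont]) (use assms in \<open>auto simp: U_def intro!: continuous_intros\<close>)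
  then show ?thesis
    by (rule continuous_on_cong[THEN iffD1, rotated 2]) (use assms in \<open>auto simp: mfun_def Gam_GF\<close>)
qed

lemma INF_eq:
  assumes "0 < \<beta>" "Z z0 = 1 / \<beta>" "0 \<le> z0" "0 \<le> b"
  shows "(INF a\<in>{0..b}. G \<beta> a b) = mfun \<beta> z0 b"
  unfolding mfun_def
  by (rule cInf_eq_minimum) (use assms mfun_le in \<open>auto simp: mfun_def\<close>)

lemma select:
  assumes "0 < \<beta>" "\<beta> < 1" "G \<beta> 0 0 > 0" "0 \<le> B" "G \<beta> 0 B \<le> 0"
  obtains b z0 where "b > 0" "z0 > 0" "Z z0 = 1 / \<beta>" "b \<le> B"
    "bstar q \<delta> \<rho> WW W d \<beta> = b" "astar q \<delta> \<rho> WW W d \<beta> = max 0 (b - z0)"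
    "mfun \<beta> z0 b = 0"
    "\<And>b'. b' \<ge> b \<Longrightarrow> mfun \<beta> z0 b' \<le> 0"
proof -
  obtain z0 where z0: "z0 > 0" "Z z0 = 1 / \<beta>" using z0_exists[OF assms(1,2)] by blast
  have m0: "mfun \<beta> z0 0 > 0" using assms z0 by (simp add: mfun_def)
  have mB: "mfun \<beta> z0 B \<le> 0" using mfun_le[OF assms(1) z0(2), of 0 B] z0 assms by auto
  obtain b where b: "0 \<le> b" "b \<le> B" "mfun \<beta> z0 b = 0"
    using IVT2'[of "mfun \<beta> z0" B 0 0] mB m0 assms continuous_on_subset[OF mfun_cont[of z0 \<beta>], of "{0..B}"] z0
    by auto
  have bpos: "b > 0" using b m0 by (cases "b = 0") auto
  have uniq: "b' = b" if "b' \<ge> 0" "mfun \<beta> z0 b' = 0" for b'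
    using mfun_decr[OF assms(1) z0(2) _ b(1), of b'] mfun_decr[OF assms(1) z0(2) _ that(1), of b] z0 b that
    by (cases b' b rule: linorder_cases) auto
  have bs: "bstar q \<delta> \<rho> WW W d \<beta> = b"
    unfolding bstar_def
  proof -
    have "(THE b. b > 0 \<and> (INF a\<in>{0..b}. G \<beta> a b) = 0) = b"
    proof (rule the_equality)
      show "b > 0 \<and> (INF a\<in>{0..b}. G \<beta> a b) = 0" using bpos b INF_eq[OF assms(1) z0(2)] z0 by auto
      fix b' assume "b' > 0 \<and> (INF a\<in>{0..b'}. G \<beta> a b') = 0"
      then show "b' = b" using uniq INF_eq[OF assms(1) z0(2), of b'] z0 by auto
    qed
    then show "(if G \<beta> 0 0 \<le> 0 then 0 else THE b. 0 < b \<and> (INF a\<in>{0..b}. G \<beta> a b) = 0) = b"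
      using assms by simp
  qed
  have as: "astar q \<delta> \<rho> WW W d \<beta> = max 0 (b - z0)"
  proof -
    have "(THE a. a \<in> {0..b} \<and> (\<forall>a'\<in>{0..b}. G \<beta> a b \<le> G \<beta> a' b)) = max 0 (b - z0)"
    proof (rule the_equality)
      show "max 0 (b - z0) \<in> {0..b} \<and> (\<forall>a'\<in>{0..b}. G \<beta> (max 0 (b - z0)) b \<le> G \<beta> a' b)"
        using mfun_le[OF assms(1) z0(2) less_imp_le[OF z0(1)], of _ b] z0 b(1) by (auto simp: mfun_def)
      fix a assume a: "a \<in> {0..b} \<and> (\<forall>a'\<in>{0..b}. G \<beta> a b \<le> G \<beta> a' b)"
      show "a = max 0 (b - z0)"
      proof (rule ccontr)
        assume "a \<noteq> max 0 (b - z0)"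
        then have "G \<beta> (max 0 (b - z0)) b < G \<beta> a b"
          using G_min[OF assms(1) z0(2)] a z0 by auto
        moreover have "max 0 (b - z0) \<in> {0..b}" using z0 b by auto
        ultimately show False using a by fastforce
      qed
    qed
    then show ?thesis unfolding astar_def using assms bs by (simp add: Let_def)
  qed
  have after: "mfun \<beta> z0 b' \<le> 0" if "b' \<ge> b" for b'
    using mfun_decr[OF assms(1) z0(2) _ b(1), of b'] z0 b that by (cases "b' = b") auto
  show ?thesis using that[OF bpos z0 b(2) bs as b(3) after] .
qed

end



lemma ev_right:
  fixes e :: real
  assumes "e > 0" "\<And>\<beta>. 0 < \<beta> \<Longrightarrow> \<beta> < e \<Longrightarrow> P \<beta>"
  shows "eventually P (at_right 0)"
  unfolding eventually_at_right_field using assms by blast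

context core begin

lemma G_a0: "G \<beta> 0 b = \<delta> - q * \<rho> - q * \<beta> * Zb b - \<beta> * d"
  unfolding Gam_unfold using q by (simp add: algebra_simps)

lemma exists_B:
  assumes "\<beta> > 0"
  shows "\<exists>B\<ge>0. G \<beta> 0 B \<le> 0"
proof -
  define B where "B = max 0 ((\<delta> - q * \<rho> - \<beta> * d) / (q * \<beta>))"
  have "Zb B - Zb 0 \<ge> B - 0" using scaleZbar_ge[OF gW q, of 0 B] by (simp add: B_def)
  then have "Zb B \<ge> B" by simp
  moreover have "q * \<beta> * B \<ge> \<delta> - q * \<rho> - \<beta> * d"
  proof -
    have "q * \<beta> * ((\<delta> - q * \<rho> - \<beta> * d) / (q * \<beta>)) = \<delta> - q * \<rho> - \<beta> * d"
      using q assms by simp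
    moreover have "q * \<beta> * ((\<delta> - q * \<rho> - \<beta> * d) / (q * \<beta>)) \<le> q * \<beta> * B"
      using q assms by (intro mult_left_mono) (auto simp: B_def)
    ultimately show ?thesis by simp
  qed
  moreover have "q * \<beta> * B \<le> q * \<beta> * Zb B"
    using q assms calculation(1) by (intro mult_left_mono) auto
  ultimately have "q * \<beta> * Zb B \<ge> \<delta> - q * \<rho> - \<beta> * d" by linarith
  then show ?thesis by (intro exI[of _ B]) (auto simp: G_a0 B_def)
qed

lemma select2:
  assumes "0 < \<beta>" "\<beta> < 1" "G \<beta> 0 0 > 0"
  obtains b z0 where "b > 0" "z0 > 0" "Z z0 = 1 / \<beta>"
    "bstar q \<delta> \<rho> WW W d \<beta> = b" "astar q \<delta> \<rho> WW W d \<beta> = max 0 (b - z0)"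
    "mfun \<beta> z0 b = 0"
    "\<And>b'. b' \<ge> b \<Longrightarrow> mfun \<beta> z0 b' \<le> 0"
proof -
  obtain B where "B \<ge> 0" "G \<beta> 0 B \<le> 0" using exists_B[OF assms(1)] by blast
  from select[OF assms this] that show ?thesis by blast
qed

lemma G_lower:
  assumes "0 \<le> a" "a \<le> b" "0 \<le> \<beta>"
  shows "G \<beta> a b \<ge> \<delta> - q * \<rho> - q * \<beta> * (Zb b + d / q + \<delta> * integral {0..b} (\<lambda>y. WW (b - y) * Z y))"
proof -
  have "integral {b - a..b} (\<lambda>y. WW (b - y) * Z y) \<le> integral {0..b} (\<lambda>y. WW (b - y) * Z y)"
  proof (rule integral_subset_le)
    show "(\<lambda>y. WW (b - y) * Z y) integrable_on {b - a..b}"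
      using assms by (intro integrable_continuous_real fb_cont) auto
    show "(\<lambda>y. WW (b - y) * Z y) integrable_on {0..b}"
      using assms by (intro integrable_continuous_real fb_cont) auto
    show "\<forall>x\<in>{0..b}. 0 \<le> WW (b - x) * Z x"
    proof
      fix x assume x: "x \<in> {0..b}"
      have "0 \<le> WW (b - x)" using gWW x by (auto simp: goodW_def)
      moreover have "0 \<le> Z x" using scaleZ_ge1[OF gW q, of x] by linarith
      ultimately show "0 \<le> WW (b - x) * Z x" by simp
    qed
  qed (use assms in auto)
  moreover have "ZY a \<ge> 1" by (rule scaleZ_ge1[OF gWW q])
  ultimately have "\<delta> * ZY a \<ge> \<delta> * 1" and
    "q * \<beta> * \<delta> * integral {b - a..b} (\<lambda>y. WW (b - y) * Z y) \<le> q * \<beta> * \<delta> * integral {0..b} (\<lambda>y. WW (b - y) * Z y)"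
    using assms q \<delta> by (intro mult_left_mono; simp)+
  then show ?thesis
    unfolding Gam_unfold by (simp add: algebra_simps)
qed

lemma core_c1:
  defines "as \<equiv> astar q \<delta> \<rho> WW W d" and "bs \<equiv> bstar q \<delta> \<rho> WW W d"
  shows "q * \<rho> / \<delta> < 1 \<longrightarrow> (\<forall>\<^sub>F \<beta> in at_right 0. bs \<beta> > 0) \<and> filterlim bs at_top (at_right 0)"
proof (intro impI conjI)
  assume "q * \<rho> / \<delta> < 1"
  then have gap: "\<delta> - q * \<rho> > 0" using \<delta> by (simp add: field_simps)
  define e where "e = min (1/2) ((\<delta> - q * \<rho>) / (\<bar>d\<bar> + 1))"
  have e: "e > 0" "e < 1" using gap by (auto simp: e_def)
  have pos: "G \<beta> 0 0 > 0" if "0 < \<beta>" "\<beta> < e" for \<beta>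
  proof -
    have "\<beta> < (\<delta> - q * \<rho>) / (\<bar>d\<bar> + 1)" using that by (simp add: e_def)
    then have "\<beta> * (\<bar>d\<bar> + 1) < \<delta> - q * \<rho>"
      by (simp add: less_divide_eq add_pos_nonneg)
    moreover have "\<beta> * d \<le> \<beta> * \<bar>d\<bar>" using mult_left_mono[of d "\<bar>d\<bar>" \<beta>] that by simp
    moreover have "\<beta> * (\<bar>d\<bar> + 1) = \<beta> * \<bar>d\<bar> + \<beta>" by (simp add: algebra_simps)
    ultimately show ?thesis unfolding Gam00 using that by linarith
  qed
  show "\<forall>\<^sub>F \<beta> in at_right 0. bs \<beta> > 0"
  proof (rule ev_right[OF e(1)])
    fix \<beta> :: real assume b: "0 < \<beta>" "\<beta> < e"
    have b1: "\<beta> < 1" using b e by simp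
    obtain bb z0 where "bb > 0" "z0 > 0" "Z z0 = 1 / \<beta>"
      "bstar q \<delta> \<rho> WW W d \<beta> = bb" "astar q \<delta> \<rho> WW W d \<beta> = max 0 (bb - z0)"
      "mfun \<beta> z0 bb = 0" "\<And>b'. b' \<ge> bb \<Longrightarrow> mfun \<beta> z0 b' \<le> 0"
      using select2[OF b(1) b1 pos[OF b]] by blast
    then show "bs \<beta> > 0" unfolding bs_def by simp
  qed
  show "filterlim bs at_top (at_right 0)"
    unfolding filterlim_at_top
  proof
    fix M :: real
    define M' where "M' = max 0 M"
    define C where "C = \<bar>Zb M' + d / q + \<delta> * integral {0..M'} (\<lambda>y. WW (M' - y) * Z y)\<bar> + 1"
    have C: "C > 0" by (simp add: C_def)
    define e' where "e' = min e ((\<delta> - q * \<rho>) / (q * C))"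
    have e': "e' > 0" using e gap q C by (auto simp: e'_def)
    show "\<forall>\<^sub>F \<beta> in at_right 0. M \<le> bs \<beta>"
    proof (rule ev_right[OF e'])
      fix \<beta> :: real assume b: "0 < \<beta>" "\<beta> < e'"
      then have be: "\<beta> < e" by (simp add: e'_def)
      have b1: "\<beta> < 1" using be e by simp
      obtain b z0 where bz: "b > 0" "z0 > 0" "Z z0 = 1 / \<beta>"
        "bstar q \<delta> \<rho> WW W d \<beta> = b" "astar q \<delta> \<rho> WW W d \<beta> = max 0 (b - z0)"
        "mfun \<beta> z0 b = 0" "\<And>b'. b' \<ge> b \<Longrightarrow> mfun \<beta> z0 b' \<le> 0"
        using select2[OF b(1) b1 pos[OF b(1) be]] by blast
      have "q * \<beta> * C < \<delta> - q * \<rho>"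
      proof -
        have "\<beta> < (\<delta> - q * \<rho>) / (q * C)" using b by (simp add: e'_def)
        then show ?thesis using q C by (simp add: field_simps)
      qed
      define X where "X = Zb M' + d / q + \<delta> * integral {0..M'} (\<lambda>y. WW (M' - y) * Z y)"
      have "X \<le> C" unfolding C_def X_def by linarith
      then have "q * \<beta> * X \<le> q * \<beta> * C" using q b by (intro mult_left_mono) auto
      moreover have "G \<beta> (max 0 (M' - z0)) M' \<ge> \<delta> - q * \<rho> - q * \<beta> * X"
        unfolding X_def using b bz by (intro G_lower) (auto simp: M'_def)
      ultimately have mpos: "mfun \<beta> z0 M' > 0"
        unfolding mfun_def using \<open>q * \<beta> * C < \<delta> - q * \<rho>\<close> by linarith
      have "M' < b" using bz(7)[of M'] mpos by force
      then show "M \<le> bs \<beta>" using bz unfolding bs_def by (simp add: M'_def)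
    qed
  qed
qed

lemma core_c2:
  defines "as \<equiv> astar q \<delta> \<rho> WW W d" and "bs \<equiv> bstar q \<delta> \<rho> WW W d"
  shows "q * \<rho> / \<delta> > 1 \<longrightarrow> (\<forall>\<^sub>F \<beta> in at_right 0. as \<beta> = 0 \<and> bs \<beta> = 0)"
proof (intro impI conjI)
  assume "q * \<rho> / \<delta> > 1"
  then have gap: "\<delta> - q * \<rho> < 0" using \<delta> by (simp add: field_simps)
  define e where "e = (q * \<rho> - \<delta>) / (\<bar>d\<bar> + 1)"
  have e: "e > 0" using gap by (simp add: e_def)
  show "\<forall>\<^sub>F \<beta> in at_right 0. as \<beta> = 0 \<and> bs \<beta> = 0"
  proof (rule ev_right[OF e])
    fix \<beta> :: real assume b: "0 < \<beta>" "\<beta> < e"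
    have "\<beta> * (\<bar>d\<bar> + 1) < q * \<rho> - \<delta>"
      using b unfolding e_def by (simp add: less_divide_eq add_pos_nonneg)
    moreover have "- (\<beta> * d) \<le> \<beta> * \<bar>d\<bar>" using mult_left_mono[of "-d" "\<bar>d\<bar>" \<beta>] b by simp
    moreover have "\<beta> * (\<bar>d\<bar> + 1) = \<beta> * \<bar>d\<bar> + \<beta>" by (simp add: algebra_simps)
    ultimately have "G \<beta> 0 0 \<le> 0" unfolding Gam00 using b by linarith
    then show "as \<beta> = 0 \<and> bs \<beta> = 0" unfolding as_def bs_def astar_def bstar_def by simp
  qed
qed

lemma core_c3:
  defines "as \<equiv> astar q \<delta> \<rho> WW W d" and "bs \<equiv> bstar q \<delta> \<rho> WW W d"
  shows "q * \<rho> / \<delta> = 1 \<and> d < 0 \<longrightarrow> (\<forall>\<beta>\<in>{0<..<1}. bs \<beta> > 0) \<and> (bs \<longlongrightarrow> the_inv_into {0..} (scaleZbar q W) (- d / q)) (at_right 0) \<and> (as \<longlongrightarrow> 0) (at_right 0)"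
proof (intro impI conjI)
  assume h: "q * \<rho> / \<delta> = 1 \<and> d < 0"
  then have qr: "q * \<rho> = \<delta>" using \<delta> by (simp add: field_simps)
  have pos00: "G \<beta> 0 0 > 0" if "\<beta> > 0" for \<beta> using h that qr unfolding Gam00 by (simp add: mult_pos_neg)
  show "\<forall>\<beta>\<in>{0<..<1}. bs \<beta> > 0"
  proof
    fix \<beta> :: real assume "\<beta> \<in> {0<..<1}"
    then show "bs \<beta> > 0" using select2[of \<beta>] pos00 unfolding bs_def by auto
  qed
  have dq: "- d / q > 0" using divide_pos_pos[of "-d" q] h q by simp
  obtain c where c: "0 \<le> c" "c \<le> - d / q" "Zb c = - d / q"
  proof -
    have "Zb (- d / q) - Zb 0 \<ge> - d / q - 0" using scaleZbar_ge[OF gW q, of 0 "- d / q"] dq by simp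
    then have "Zb 0 \<le> - d / q" "- d / q \<le> Zb (- d / q)" using dq by auto
    then show ?thesis using IVT'[of Zb 0 "- d / q" "- d / q"] dq
        continuous_on_subset[OF scaleZbar_cont[OF gW], of "{0..- d / q}"] that by auto
  qed
  have inj: "inj_on Zb {0..}"
  proof (rule inj_onI)
    fix x y :: real assume xy: "x \<in> {0..}" "y \<in> {0..}" "Zb x = Zb y"
    show "x = y"
    proof (rule ccontr)
      assume "x \<noteq> y"
      then consider "x < y" | "y < x" by linarith
      then show False
        using scaleZbar_ge[OF gW q, of x y] scaleZbar_ge[OF gW q, of y x] xy by (cases; auto)
    qed
  qed
  have inv: "the_inv_into {0..} Zb (- d / q) = c"
    by (rule the_inv_into_f_eq[OF inj c(3)]) (use c in auto)
  have Zc: "Z c \<ge> 1" by (rule scaleZ_ge1[OF gW q])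
  define e where "e = 1 / (Z c + 1)"
  have e: "e > 0" "e < 1" using Zc by (auto simp: e_def)
  have ev: "\<forall>\<^sub>F \<beta> in at_right 0. bs \<beta> = c \<and> as \<beta> = 0"
  proof (rule ev_right[OF e(1)])
    fix \<beta> :: real assume b: "0 < \<beta>" "\<beta> < e"
    then have b1: "\<beta> < 1" using e by simp
    obtain b z0 where bz: "b > 0" "z0 > 0" "Z z0 = 1 / \<beta>" "bs \<beta> = b" "as \<beta> = max 0 (b - z0)"
        "mfun \<beta> z0 b = 0"
      using select2[OF b(1) b1 pos00[OF b(1)]] unfolding as_def bs_def by metis
    have "\<beta> * (Z c + 1) < 1" using b Zc by (simp add: e_def field_simps)
    then have "\<beta> * Z c < 1" using b by (simp add: algebra_simps)
    then have cz: "c < z0" using Zlt_iff(1)[OF b(1) bz(3)] bz c by auto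
    have mc: "mfun \<beta> z0 c = 0"
      unfolding mfun_def using cz qr c q by (simp add: G_a0 algebra_simps)
    have "b = c"
      using mfun_decr[OF b(1) bz(3) _ c(1), of b] mfun_decr[OF b(1) bz(3) _ less_imp_le[OF bz(1)], of c]
        bz mc by (cases b c rule: linorder_cases) auto
    then show "bs \<beta> = c \<and> as \<beta> = 0" using bz cz by auto
  qed
  show "(bs \<longlongrightarrow> the_inv_into {0..} (scaleZbar q W) (- d / q)) (at_right 0)"
    unfolding inv by (rule tendsto_eventually) (use ev in \<open>auto elim: eventually_mono\<close>)
  show "(as \<longlongrightarrow> 0) (at_right 0)"
    by (rule tendsto_eventually) (use ev in \<open>auto elim: eventually_mono\<close>)
qed

lemma core_c4:
  defines "as \<equiv> astar q \<delta> \<rho> WW W d" and "bs \<equiv> bstar q \<delta> \<rho> WW W d"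
  shows "q * \<rho> / \<delta> = 1 \<and> d \<ge> 0 \<longrightarrow> (\<forall>\<beta>\<in>{0<..<1}. as \<beta> = 0 \<and> bs \<beta> = 0)"
proof (intro impI conjI)
  assume h: "q * \<rho> / \<delta> = 1 \<and> d \<ge> 0"
  then have "q * \<rho> = \<delta>" using \<delta> by (simp add: field_simps)
  then have "G \<beta> 0 0 \<le> 0" if "\<beta> \<in> {0<..<1}" for \<beta> using h that unfolding Gam00 by simp
  then show "\<forall>\<beta>\<in>{0<..<1}. as \<beta> = 0 \<and> bs \<beta> = 0"
    unfolding as_def bs_def astar_def bstar_def by simp
qed

theorem core_main:
  defines "as \<equiv> astar q \<delta> \<rho> WW W d" and "bs \<equiv> bstar q \<delta> \<rho> WW W d"
  shows
    "(q * \<rho> / \<delta> < 1 \<longrightarrow>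
        (\<forall>\<^sub>F \<beta> in at_right 0. bs \<beta> > 0) \<and> filterlim bs at_top (at_right 0)) \<and>
     (q * \<rho> / \<delta> > 1 \<longrightarrow>
        (\<forall>\<^sub>F \<beta> in at_right 0. as \<beta> = 0 \<and> bs \<beta> = 0)) \<and>
     (q * \<rho> / \<delta> = 1 \<and> d < 0 \<longrightarrow>
        (\<forall>\<beta>\<in>{0<..<1}. bs \<beta> > 0) \<and>
        (bs \<longlongrightarrow> the_inv_into {0..} (scaleZbar q W) (- d / q)) (at_right 0) \<and>
        (as \<longlongrightarrow> 0) (at_right 0)) \<and>
     (q * \<rho> / \<delta> = 1 \<and> d \<ge> 0 \<longrightarrow>
        (\<forall>\<beta>\<in>{0<..<1}. as \<beta> = 0 \<and> bs \<beta> = 0))"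
  unfolding as_def bs_def using core_c1 core_c2 core_c3 core_c4 by blast

end



lemma exp_int:
  fixes \<theta> x2 :: real
  assumes "\<theta> > 0" "0 \<le> x2"
  shows "((\<lambda>x. exp (- \<theta> * x)) has_integral (1 - exp (- \<theta> * x2)) / \<theta>) {0..x2}"
proof -
  have "((\<lambda>x. exp (- \<theta> * x)) has_integral (- exp (- \<theta> * x2) / \<theta>) - (- exp (- \<theta> * 0) / \<theta>)) {0..x2}"
  proof (rule fundamental_theorem_of_calculus[OF assms(2)])
    fix x assume "x \<in> {0..x2}"
    have "((\<lambda>x. - exp (- \<theta> * x) / \<theta>) has_real_derivative exp (- \<theta> * x)) (at x within {0..x2})"
      using assms by (auto intro!: derivative_eq_intros)
    then show "((\<lambda>x. - exp (- \<theta> * x) / \<theta>) has_vector_derivative exp (- \<theta> * x)) (at x within {0..x2})"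
      by (simp add: has_real_derivative_iff_has_vector_derivative)
  qed
  then show ?thesis by (simp add: diff_divide_distrib add_divide_distrib)
qed

lemma limit_aux:
  assumes "x1 > 0"
  shows "((\<lambda>\<theta>::real. \<theta> * exp (- (\<theta> - \<theta>1) * x1)) \<longlongrightarrow> 0) at_top"
proof -
  have lim0: "filterlim (\<lambda>\<theta>::real. \<theta> * x1) at_top at_top"
    by (rule filterlim_tendsto_pos_mult_at_top[OF tendsto_const assms filterlim_ident, THEN filterlim_cong[THEN iffD1, rotated 3]])
       (auto simp: mult.commute)
  have "((\<lambda>\<theta>. (\<theta> * x1) ^ 1 / exp (\<theta> * x1)) \<longlongrightarrow> 0) at_top"
    by (rule filterlim_compose[OF tendsto_power_div_exp_0 lim0])
  then have "((\<lambda>\<theta>. exp (\<theta>1 * x1) / x1 * ((\<theta> * x1) ^ 1 / exp (\<theta> * x1))) \<longlongrightarrow> exp (\<theta>1 * x1) / x1 * 0) at_top"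
    by (intro tendsto_mult tendsto_const)
  moreover have "exp (\<theta>1 * x1) / x1 * ((\<theta> * x1) ^ 1 / exp (\<theta> * x1)) = \<theta> * exp (- (\<theta> - \<theta>1) * x1)" for \<theta>
  proof -
    have "exp (- (\<theta> - \<theta>1) * x1) = exp (\<theta>1 * x1) / exp (\<theta> * x1)"
      by (simp add: exp_diff[symmetric] algebra_simps)
    then show ?thesis using assms by (simp add: field_simps)
  qed
  ultimately show ?thesis by simp
qed

lemma scale_W0_nonneg:
  assumes sf: "is_scale_function psi q W" and th1: "\<theta>1 > 0" and big: "\<And>\<theta>. \<theta> \<ge> \<theta>1 \<Longrightarrow> psi \<theta> > q"
  shows "W 0 \<ge> 0"
proof (rule ccontr)
  assume "\<not> W 0 \<ge> 0"
  then have W0: "W 0 < 0" by simp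
  have cont: "continuous_on {0..} W" and sm: "strict_mono_on {0..} W"
    and LT: "\<And>\<theta>. \<theta> > 0 \<Longrightarrow> psi \<theta> > q \<Longrightarrow> ((\<lambda>x. exp (- \<theta> * x) * W x) has_integral (1 / (psi \<theta> - q))) {0..}"
    using sf unfolding is_scale_function_def by auto
  define L where "L \<theta> = 1 / (psi \<theta> - q)" for \<theta>
  have Lpos: "L \<theta> > 0" if "\<theta> \<ge> \<theta>1" for \<theta> using big[OF that] by (simp add: L_def)
  have LT': "((\<lambda>x. exp (- \<theta> * x) * W x) has_integral L \<theta>) {0..}" if "\<theta> \<ge> \<theta>1" for \<theta>
    unfolding L_def using LT[of \<theta>] big[OF that] th1 that by auto
  show False
  proof (cases "\<forall>x\<ge>0. W x \<le> 0")
    case True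
    have "0 \<le> - L \<theta>1"
      by (rule has_integral_nonneg[OF has_integral_neg[OF LT'[of \<theta>1]]])
         (use True in \<open>auto simp: mult_nonneg_nonpos\<close>)
    then show False using Lpos[of \<theta>1] by simp
  next
    case False
    then obtain x1' where x1': "x1' \<ge> 0" "W x1' > 0" by (auto simp: not_le)
    obtain x1 where x1: "0 \<le> x1" "x1 \<le> x1'" "W x1 = 0"
      using IVT'[of W 0 0 x1'] x1' W0 continuous_on_subset[OF cont, of "{0..x1'}"] by auto
    have x1pos: "x1 > 0" using x1 W0 by (cases "x1 = 0") auto
    have Wneg: "W x < 0" if "0 \<le> x" "x < x1" for x
      using strict_mono_onD[OF sm, of x x1] that x1 by auto
    have Wpos: "W x > 0" if "x1 < x" for x
      using strict_mono_onD[OF sm, of x1 x] that x1 by auto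
    define x2 where "x2 = x1 / 2"
    have x2: "0 < x2" "x2 < x1" using x1pos by (auto simp: x2_def)
    define w2 where "w2 = W x2"
    have w2: "w2 < 0" using Wneg x2 by (simp add: w2_def)
    define g1 where "g1 x = exp (- \<theta>1 * x) * W x" for x
    have g1int: "(g1 has_integral L \<theta>1) {0..}" unfolding g1_def by (rule LT') simp
    have g1c: "continuous_on {0..x1} g1" unfolding g1_def
      by (intro continuous_intros continuous_on_subset[OF cont]) auto
    then obtain I0 where I0: "(g1 has_integral I0) {0..x1}"
      using integrable_continuous_real by blast
    have "((\<lambda>x. if x \<in> {..x1} then g1 x else 0) has_integral I0) {0..}"
      using I0 by (subst has_integral_restrict_Int) (simp add: Int_commute atLeastAtMost_def)
    from has_integral_diff[OF g1int this]
    have "((\<lambda>x. g1 x - (if x \<in> {..x1} then g1 x else 0)) has_integral L \<theta>1 - I0) {0..}" .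
    moreover have "(\<lambda>x. g1 x - (if x \<in> {..x1} then g1 x else 0)) = (\<lambda>x. if x1 < x then g1 x else 0)"
      by (auto simp: fun_eq_iff)
    ultimately have T1: "((\<lambda>x. if x1 < x then g1 x else 0) has_integral L \<theta>1 - I0) {0..}" by simp
    define T where "T = L \<theta>1 - I0"
    define k where "k = 1 - exp (- \<theta>1 * x2)"
    have k: "k > 0" using th1 x2 by (simp add: k_def)
    have bound: "0 < w2 * k + \<theta> * exp (- (\<theta> - \<theta>1) * x1) * T" if th: "\<theta> \<ge> \<theta>1" for \<theta>
    proof -
      have thpos: "\<theta> > 0" using th th1 by simp
      have A: "((\<lambda>x. if x \<in> {..x2} then exp (- \<theta> * x) * w2 else 0) has_integral
                 (1 - exp (- \<theta> * x2)) / \<theta> * w2) {0..}"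
        by (subst has_integral_restrict_Int)
           (use has_integral_mult_left[OF exp_int[OF thpos less_imp_le[OF x2(1)]], of w2] in
             \<open>simp add: Int_commute atLeastAtMost_def\<close>)
      have B: "((\<lambda>x. exp (- (\<theta> - \<theta>1) * x1) * (if x1 < x then g1 x else 0)) has_integral
                 exp (- (\<theta> - \<theta>1) * x1) * T) {0..}"
        unfolding T_def by (rule has_integral_mult_right[OF T1])
      have le: "L \<theta> \<le> (1 - exp (- \<theta> * x2)) / \<theta> * w2 + exp (- (\<theta> - \<theta>1) * x1) * T"
      proof (rule has_integral_le[OF LT'[OF th] has_integral_add[OF A B]])
        fix x :: real assume x: "x \<in> {0..}"
        show "exp (- \<theta> * x) * W x \<le> (if x \<in> {..x2} then exp (- \<theta> * x) * w2 else 0) +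
                exp (- (\<theta> - \<theta>1) * x1) * (if x1 < x then g1 x else 0)"
        proof (cases "x \<le> x2")
          case True
          then have "W x \<le> w2" unfolding w2_def using strict_mono_onD[OF sm, of x x2] x x2
            by (cases "x = x2") auto
          then show ?thesis using True x2 by (auto intro!: mult_left_mono)
        next
          case False
          show ?thesis
          proof (cases "x1 < x")
            case True
            have "exp (- \<theta> * x) = exp (- (\<theta> - \<theta>1) * x) * exp (- \<theta>1 * x)"
              by (simp add: exp_add[symmetric] algebra_simps)
            moreover have "exp (- (\<theta> - \<theta>1) * x) \<le> exp (- (\<theta> - \<theta>1) * x1)"
            proof -
              have "(\<theta> - \<theta>1) * x1 \<le> (\<theta> - \<theta>1) * x" using True th by (intro mult_left_mono) auto
              then have "- (\<theta> - \<theta>1) * x \<le> - (\<theta> - \<theta>1) * x1" by (simp only: mult_minus_left neg_le_iff_le)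
              then show ?thesis by simp
            qed
            moreover have "exp (- \<theta>1 * x) * W x \<ge> 0" using Wpos[OF True] by simp
            ultimately show ?thesis using False True unfolding g1_def
              by (simp add: mult.assoc mult_right_mono)
          next
            case False2: False
            then have "W x \<le> 0" using Wneg[of x] x x1 by (cases "x = x1") auto
            then show ?thesis using False False2 by (simp add: mult_nonneg_nonpos)
          qed
        qed
      qed
      have "(1 - exp (- \<theta> * x2)) \<ge> k" unfolding k_def using th x2 by auto
      then have "(1 - exp (- \<theta> * x2)) * w2 \<le> k * w2" using w2 by (simp add: mult_right_mono_neg)
      moreover have "\<theta> * L \<theta> \<le> \<theta> * ((1 - exp (- \<theta> * x2)) / \<theta> * w2 + exp (- (\<theta> - \<theta>1) * x1) * T)"
        by (rule mult_left_mono[OF le]) (use thpos in auto)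
      moreover have "\<theta> * ((1 - exp (- \<theta> * x2)) / \<theta> * w2 + exp (- (\<theta> - \<theta>1) * x1) * T)
          = (1 - exp (- \<theta> * x2)) * w2 + \<theta> * exp (- (\<theta> - \<theta>1) * x1) * T"
        using thpos by (simp add: field_simps)
      ultimately have "\<theta> * L \<theta> \<le> k * w2 + \<theta> * exp (- (\<theta> - \<theta>1) * x1) * T" by linarith
      moreover have "\<theta> * L \<theta> > 0" using Lpos[OF th] thpos by simp
      ultimately show ?thesis by (simp add: algebra_simps)
    qed
    have lim: "((\<lambda>\<theta>. \<theta> * exp (- (\<theta> - \<theta>1) * x1) * T) \<longlongrightarrow> 0 * T) at_top"
      by (intro tendsto_mult limit_aux x1pos tendsto_const)
    have "- (w2 * k) > 0" using w2 k by (simp add: mult_neg_pos)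
    then have "eventually (\<lambda>\<theta>. \<theta> * exp (- (\<theta> - \<theta>1) * x1) * T < - (w2 * k)) at_top"
      using lim by (intro order_tendstoD) auto
    moreover have "eventually (\<lambda>\<theta>. \<theta> \<ge> \<theta>1) at_top" by simp
    ultimately have "eventually (\<lambda>\<theta>. \<theta> * exp (- (\<theta> - \<theta>1) * x1) * T < - (w2 * k) \<and> \<theta> \<ge> \<theta>1) at_top"
      by (rule eventually_conj)
    then obtain N where N: "\<And>\<theta>. \<theta> \<ge> N \<Longrightarrow> \<theta> * exp (- (\<theta> - \<theta>1) * x1) * T < - (w2 * k) \<and> \<theta> \<ge> \<theta>1"
      by (auto simp: eventually_at_top_linorder)
    then have "N * exp (- (N - \<theta>1) * x1) * T < - (w2 * k)" "N \<ge> \<theta>1" using N[OF order_refl] by auto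
    then show False using bound[of N] by linarith
  qed
qed

lemma goodW_of_scale:
  assumes sf: "is_scale_function psi q W" and th1: "\<theta>1 > 0" and big: "\<And>\<theta>. \<theta> \<ge> \<theta>1 \<Longrightarrow> psi \<theta> > q"
  shows "continuous_on {0..} W \<and> (\<forall>x\<ge>0. 0 \<le> W x) \<and> (\<forall>x>0. 0 < W x) \<and> strict_mono_on {0..} W"
proof -
  have W0: "W 0 \<ge> 0" by (rule scale_W0_nonneg[OF assms])
  have sm: "strict_mono_on {0..} W" and c: "continuous_on {0..} W" using sf by (auto simp: is_scale_function_def)
  have "0 < W x" if "x > 0" for x using strict_mono_onD[OF sm, of 0 x] W0 that by auto
  then show ?thesis using W0 sm c by (metis less_eq_real_def)
qed




lemma exp_neg_quad:
  fixes x :: real assumes "0 \<le> x"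
  shows "exp (- x) \<le> 1 - x + x\<^sup>2 / 2"
proof -
  have e: "1 + x + x\<^sup>2 / 2 \<le> exp x" by (rule exp_lower_Taylor_quadratic[OF assms])
  have p: "1 + x + x\<^sup>2 / 2 > 0" using assms by (simp add: add_pos_nonneg)
  have "(1 - x + x\<^sup>2 / 2) * (1 + x + x\<^sup>2 / 2) = 1 + x^4 / 4"
    by (simp add: algebra_simps power2_eq_square power4_eq_xxxx)
  then have "(1 - x + x\<^sup>2 / 2) * (1 + x + x\<^sup>2 / 2) \<ge> 1" by simp
  then have "1 / (1 + x + x\<^sup>2 / 2) \<le> 1 - x + x\<^sup>2 / 2" using p by (simp add: divide_le_eq)
  moreover have "exp (- x) \<le> 1 / (1 + x + x\<^sup>2 / 2)"
    using e p by (simp add: exp_minus divide_simps)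
  ultimately show ?thesis by linarith
qed

locale lev =
  fixes gam s :: real and Lm :: "real measure"
  assumes tr: "spos_levy_triplet gam s Lm"
begin

lemma s_nonneg: "s \<ge> 0" and sL: "sets Lm = sets borel" and null0: "emeasure Lm {..0} = 0"
  and fin: "(\<integral>\<^sup>+ z. ennreal (min 1 (z^2)) \<partial>Lm) < \<infinity>"
  using tr unfolding spos_levy_triplet_def by auto

lemma spc[simp]: "space Lm = UNIV"
  using sets_eq_imp_space_eq[OF sL] by simp

lemma meas: fixes f :: "real \<Rightarrow> real" assumes "f \<in> borel_measurable borel" shows "f \<in> borel_measurable Lm"
proof -
  have "borel_measurable Lm = (borel_measurable borel :: (real \<Rightarrow> real) set)"
    by (rule measurable_cong_sets[OF sL refl])
  then show ?thesis using assms by simp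
qed

lemma sets_Lm[simp]: "A \<in> sets borel \<Longrightarrow> A \<in> sets Lm"
  using sL by simp

lemma AEpos: "AE z in Lm. z > 0"
proof (rule AE_I'[of "{..0}"])
  show "{..0} \<in> null_sets Lm" using null0 by (intro null_setsI) auto
qed auto

lemma fin_meas:
  assumes "0 < e" "e \<le> 1"
  shows "emeasure Lm {e<..} < \<infinity>"
proof -
  have "(\<integral>\<^sup>+ z. ennreal (e^2) * indicator {e<..} z \<partial>Lm) \<le> (\<integral>\<^sup>+ z. ennreal (min 1 (z^2)) \<partial>Lm)"
  proof (rule nn_integral_mono)
    fix z show "ennreal (e^2) * indicator {e<..} z \<le> ennreal (min 1 (z^2))"
    proof (cases "e < z")
      case True
      then have "e^2 \<le> z^2" using assms by (intro power_mono) auto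
      moreover have "e^2 \<le> 1" using assms by (simp add: power_le_one)
      ultimately show ?thesis using True by (simp add: ennreal_leI)
    qed simp
  qed
  also have "\<dots> < \<infinity>" by (rule fin)
  finally have "ennreal (e^2) * emeasure Lm {e<..} < \<infinity>"
    by (subst (asm) nn_integral_cmult_indicator) auto
  moreover have "ennreal (e^2) \<noteq> 0" using assms by simp
  ultimately show ?thesis
    using ennreal_mult_top[of "ennreal (e^2)"] by (cases "emeasure Lm {e<..} = \<infinity>") (auto simp: less_top)
qed

lemma fin_meas2:
  assumes "0 < e" "e \<le> 1" "A \<subseteq> {e<..}" "A \<in> sets borel"
  shows "emeasure Lm A < \<infinity>"
  using emeasure_mono[OF assms(3), of Lm] fin_meas[OF assms(1,2)] by simp

definition fth :: "real \<Rightarrow> real \<Rightarrow> real" where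
  "fth \<theta> z = exp (- \<theta> * z) - 1 + \<theta> * z * indicator {..<1} z"

lemma psi_eq: "levy_psi gam s Lm \<theta> = - gam * \<theta> + s * \<theta>^2 / 2 + (\<integral> z. fth \<theta> z \<partial>Lm)"
  unfolding levy_psi_def fth_def by simp

lemma fth_int:
  assumes "\<theta> > 0"
  shows "integrable Lm (fth \<theta>)"
proof (rule Bochner_Integration.integrable_bound)
  define C where "C = 1 + \<theta>^2"
  have C: "C > 0" by (simp add: C_def add_pos_nonneg)
  show "integrable Lm (\<lambda>z. C * min 1 (z^2))"
  proof (rule integrableI_nonneg)
    show "(\<lambda>z. C * min 1 (z^2)) \<in> borel_measurable Lm" by (intro meas) measurable
    show "AE x in Lm. 0 \<le> C * min 1 (x^2)" using C by auto
    have "(\<integral>\<^sup>+ z. ennreal (C * min 1 (z^2)) \<partial>Lm) = ennreal C * (\<integral>\<^sup>+ z. ennreal (min 1 (z^2)) \<partial>Lm)"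
      using C by (subst nn_integral_cmult[symmetric]) (auto intro!: meas nn_integral_cong simp: ennreal_mult)
    also have "\<dots> < \<infinity>" using fin by (simp add: ennreal_mult_less_top)
    finally show "(\<integral>\<^sup>+ z. ennreal (C * min 1 (z^2)) \<partial>Lm) < \<infinity>" .
  qed
  show "fth \<theta> \<in> borel_measurable Lm" unfolding fth_def by (intro meas) measurable
  show "AE z in Lm. norm (fth \<theta> z) \<le> norm (C * min 1 (z^2))"
    using AEpos
  proof eventually_elim
    case (elim z)
    show ?case
    proof (cases "z < 1")
      case True
      have lo: "exp (- (\<theta> * z)) \<ge> 1 + - (\<theta> * z)" by (rule exp_ge_add_one_self)
      have hi: "exp (- (\<theta> * z)) \<le> 1 - \<theta> * z + (\<theta> * z)\<^sup>2 / 2"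
        using elim assms by (intro exp_neg_quad) auto
      have "(\<theta> * z)\<^sup>2 / 2 \<le> C * z^2"
        unfolding C_def by (simp add: power_mult_distrib algebra_simps add_nonneg_nonneg)
      moreover have "z^2 \<le> 1" using True elim by (simp add: power_le_one)
      ultimately show ?thesis using True lo hi C unfolding fth_def by (auto simp: min_def)
    next
      case False
      have f: "fth \<theta> z = exp (- \<theta> * z) - 1" using False unfolding fth_def by simp
      have "exp (- \<theta> * z) \<le> 1" using elim assms by simp
      moreover have "0 < exp (- \<theta> * z)" by simp
      ultimately have "\<bar>fth \<theta> z\<bar> \<le> 1" unfolding f by linarith
      moreover have "1 \<le> z^2" using False by (simp add: one_le_power)
      moreover have "1 \<le> C" unfolding C_def by simp
      ultimately show ?thesis using C by (simp add: min_def)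
    qed
  qed
qed

definition Af :: "real \<Rightarrow> real" where
  "Af e = (\<integral> z. z * indicator {e<..<1} z \<partial>Lm)"

lemma Af_int:
  assumes "0 < e" "e \<le> 1"
  shows "integrable Lm (\<lambda>z. z * indicator {e<..<1} z)"
proof (rule Bochner_Integration.integrable_bound)
  have "emeasure Lm {e<..<1} < \<infinity>" by (rule fin_meas2[OF assms]) auto
  then show "integrable Lm (indicator {e<..<1} :: real \<Rightarrow> real)"
    by (intro integrable_real_indicator) auto
  show "(\<lambda>z. z * indicator {e<..<1} z) \<in> borel_measurable Lm" by (intro meas) measurable
  show "AE x in Lm. norm (x * indicator {e<..<1} x) \<le> norm (indicator {e<..<1} x :: real)"
    using assms by (auto split: split_indicator)
qed

lemma Af_nonneg: "0 < e \<Longrightarrow> Af e \<ge> 0"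
  unfolding Af_def by (intro Bochner_Integration.integral_nonneg) (auto split: split_indicator)

lemma psi_lower:
  assumes "\<theta> > 0" "0 < e" "e < 1"
  shows "levy_psi gam s Lm \<theta> \<ge> - gam * \<theta> + s * \<theta>^2 / 2 + \<theta> * Af e
      - (measure Lm {e<..<1} + measure Lm {1..})"
proof -
  define k where "k z = \<theta> * (z * indicator {e<..<1} z) - indicator {e<..<1} z - indicator {1..} z" for z
  have "emeasure Lm {e<..<1} < \<infinity>" by (rule fin_meas2[of e]) (use assms in auto)
  then have i1: "integrable Lm (indicator {e<..<1} :: real \<Rightarrow> real)"
    by (intro integrable_real_indicator) auto
  have "emeasure Lm {1..} < \<infinity>" by (rule fin_meas2[of e]) (use assms in auto)
  then have i2: "integrable Lm (indicator {1..} :: real \<Rightarrow> real)"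
    by (intro integrable_real_indicator) auto
  have i3: "integrable Lm (\<lambda>z. z * indicator {e<..<1} z)" using Af_int assms by auto
  have ki: "integrable Lm k" unfolding k_def using i1 i2 i3 by auto
  have "(\<integral> z. k z \<partial>Lm) = \<theta> * Af e - measure Lm {e<..<1} - measure Lm {1..}"
    unfolding k_def Af_def using i1 i2 i3 by (simp add: Bochner_Integration.integral_diff)
  moreover have "(\<integral> z. k z \<partial>Lm) \<le> (\<integral> z. fth \<theta> z \<partial>Lm)"
  proof (rule Bochner_Integration.integral_mono[OF ki fth_int[OF assms(1)]])
    fix z :: real
    have lo: "exp (- (\<theta> * z)) \<ge> 1 + - (\<theta> * z)" by (rule exp_ge_add_one_self)
    have ep: "exp (- (\<theta> * z)) > 0" by simp
    consider "z \<le> e" | "e < z" "z < 1" | "1 \<le> z" by linarith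
    then show "k z \<le> fth \<theta> z"
    proof cases
      case 1
      then have "k z = 0" "fth \<theta> z = exp (- (\<theta> * z)) - 1 + \<theta> * z"
        using assms unfolding k_def fth_def by (auto simp: indicator_def)
      then show ?thesis using lo by simp
    next
      case 2
      then have "k z = \<theta> * z - 1" "fth \<theta> z = exp (- (\<theta> * z)) - 1 + \<theta> * z"
        using assms unfolding k_def fth_def by (auto simp: indicator_def)
      then show ?thesis using ep by simp
    next
      case 3
      then have "k z = - 1" "fth \<theta> z = exp (- (\<theta> * z)) - 1"
        using assms unfolding k_def fth_def by (auto simp: indicator_def)
      then show ?thesis using ep by simp
    qed
  qed
  moreover have "s * \<theta>^2 / 2 \<ge> 0" using s_nonneg by simp
  ultimately show ?thesis unfolding psi_eq by linarith
qed

end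



context lev begin

lemma meas_ind[measurable]: "(\<lambda>z. z * indicator {a<..<b} z) \<in> borel_measurable Lm"
  by (intro meas) measurable

lemma exists_e:
  assumes ns: "\<not> subordinator_triplet gam s Lm" and s0: "s = 0"
  shows "\<exists>e. 0 < e \<and> e < 1 \<and> Af e > gam"
proof (cases "gam < 0")
  case True
  then show ?thesis using Af_nonneg[of "1/2"] by (intro exI[of _ "1/2"]) auto
next
  case False
  then have g0: "gam \<ge> 0" by simp
  define nn where "nn = (\<integral>\<^sup>+ z. ennreal (z * indicator {0<..<1} z) \<partial>Lm)"
  define I where "I = (\<integral> z. z * indicator {0<..<1} z \<partial>Lm)"
  have ns': "\<not> (nn < \<infinity> \<and> gam - I \<ge> 0)"
    using ns s0 unfolding subordinator_triplet_def nn_def I_def by simp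
  have gnn: "ennreal gam < nn"
  proof (cases "nn < \<infinity>")
    case True
    then have gI: "gam < I" using ns' by simp
    have int: "integrable Lm (\<lambda>z. z * indicator {0<..<1} z)"
      by (rule integrableI_nonneg) (use True in \<open>auto simp: nn_def split: split_indicator\<close>)
    have "nn = ennreal I" unfolding nn_def I_def
      by (rule nn_integral_eq_integral[OF int]) (auto split: split_indicator)
    then show ?thesis using gI g0 by (simp add: ennreal_less_iff)
  next
    case False
    then have "nn = \<infinity>" by (simp add: not_less top_unique)
    then show ?thesis by simp
  qed
  define F where "F n z = ennreal (z * indicator {1 / (real n + 2)<..<1} z)" for n z
  have inc: "incseq F"
    unfolding incseq_def le_fun_def
  proof (intro allI impI)
    fix m n :: nat and z :: real assume "m \<le> n"
    then have "1 / (real n + 2) \<le> 1 / (real m + 2)" by (simp add: frac_le)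
    then show "F m z \<le> F n z" unfolding F_def
      by (auto split: split_indicator intro!: ennreal_leI)
  qed
  have Fm: "F n \<in> borel_measurable Lm" for n unfolding F_def by measurable
  have lim: "(\<lambda>n. F n z) \<longlonglongrightarrow> ennreal (z * indicator {0<..<1} z)" for z
  proof (cases "0 < z \<and> z < 1")
    case True
    obtain N :: nat where N: "1 / z < real N" using reals_Archimedean2 by blast
    have "eventually (\<lambda>n. F n z = ennreal (z * indicator {0<..<1} z)) sequentially"
    proof (rule eventually_sequentiallyI[of N])
      fix n assume "N \<le> n"
      then have "1 / z < real n + 2" using N by linarith
      then have "1 / (real n + 2) < z" using True by (simp add: field_simps)
      then show "F n z = ennreal (z * indicator {0<..<1} z)" using True unfolding F_def by simp
    qed
    then show ?thesis by (rule tendsto_eventually)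
  next
    case False
    have "F n z = 0" for n
    proof -
      have p: "1 / (real n + 2) > 0" by simp
      have "z \<notin> {1 / (real n + 2)<..<1}"
      proof
        assume "z \<in> {1 / (real n + 2)<..<1}"
        then have "1 / (real n + 2) < z" "z < 1" by auto
        then show False using p False by linarith
      qed
      then show ?thesis unfolding F_def by simp
    qed
    moreover have eq: "ennreal (z * indicator {0<..<1} z) = 0" using False by (auto simp: indicator_def)
    ultimately show ?thesis by simp
  qed
  have "(\<lambda>n. integral\<^sup>N Lm (F n)) \<longlonglongrightarrow> nn"
    unfolding nn_def by (rule nn_integral_LIMSEQ[OF inc Fm lim])
  from order_tendstoD(1)[OF this gnn]
  obtain N where N: "ennreal gam < integral\<^sup>N Lm (F N)"
    by (auto simp: eventually_sequentially)
  define e where "e = 1 / (real N + 2)"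
  have e: "0 < e" "e < 1" by (auto simp: e_def)
  have "integral\<^sup>N Lm (F N) = ennreal (Af e)"
    unfolding F_def Af_def e_def[symmetric]
    by (rule nn_integral_eq_integral[OF Af_int]) (use e in \<open>auto split: split_indicator\<close>)
  then have "gam < Af e" using N g0 by (simp add: ennreal_less_iff)
  then show ?thesis using e by blast
qed

lemma psi_big:
  assumes ns: "\<not> subordinator_triplet gam s Lm"
  shows "\<exists>\<theta>1>0. \<forall>\<theta>\<ge>\<theta>1. levy_psi gam s Lm \<theta> > q"
proof (cases "s = 0")
  case True
  obtain e where e: "0 < e" "e < 1" "Af e > gam" using exists_e[OF ns True] by blast
  define Bc where "Bc = measure Lm {e<..<1} + measure Lm {1..}"
  define R where "R = \<bar>Bc\<bar> + \<bar>q\<bar> + 1"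
  define \<eta> where "\<eta> = Af e - gam"
  have \<eta>: "\<eta> > 0" using e by (simp add: \<eta>_def)
  define \<theta>1 where "\<theta>1 = max 1 (R / \<eta>)"
  show ?thesis
  proof (intro exI[of _ \<theta>1] conjI allI impI)
    show "\<theta>1 > 0" by (simp add: \<theta>1_def)
    fix \<theta> assume th: "\<theta>1 \<le> \<theta>"
    then have thp: "\<theta> > 0" "\<theta> \<ge> R / \<eta>" by (auto simp: \<theta>1_def)
    then have "\<theta> * \<eta> \<ge> R" using \<eta> by (simp add: divide_le_eq)
    moreover have "levy_psi gam s Lm \<theta> \<ge> - gam * \<theta> + s * \<theta>^2 / 2 + \<theta> * Af e - Bc"
      unfolding Bc_def using psi_lower[OF thp(1) e(1,2)] by simp
    moreover have "- gam * \<theta> + s * \<theta>^2 / 2 + \<theta> * Af e = \<theta> * \<eta>"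
      using True by (simp add: \<eta>_def algebra_simps)
    ultimately show "levy_psi gam s Lm \<theta> > q" unfolding R_def by linarith
  qed
next
  case False
  then have sp: "s > 0" using s_nonneg by simp
  define e :: real where "e = 1/2"
  have e: "0 < e" "e < 1" by (auto simp: e_def)
  define Bc where "Bc = measure Lm {e<..<1} + measure Lm {1..}"
  define R where "R = \<bar>Bc\<bar> + \<bar>q\<bar> + 1"
  define G where "G = \<bar>gam\<bar>"
  define \<theta>1 where "\<theta>1 = max 1 (2 * (G + R) / s)"
  show ?thesis
  proof (intro exI[of _ \<theta>1] conjI allI impI)
    show "\<theta>1 > 0" by (simp add: \<theta>1_def)
    fix \<theta> assume th: "\<theta>1 \<le> \<theta>"
    then have thp: "\<theta> \<ge> 1" "\<theta> \<ge> 2 * (G + R) / s" by (auto simp: \<theta>1_def)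
    then have "s * \<theta> / 2 \<ge> G + R" using sp by (simp add: divide_le_eq algebra_simps)
    then have "\<theta> * (s * \<theta> / 2) \<ge> \<theta> * (G + R)" using thp by (intro mult_left_mono) auto
    moreover have "R \<ge> 0" by (simp add: R_def)
    then have "\<theta> * R \<ge> R" using mult_right_mono[of 1 \<theta> R] thp(1) by simp
    moreover have "s * \<theta>^2 / 2 = \<theta> * (s * \<theta> / 2)" by (simp add: power2_eq_square)
    moreover have "gam * \<theta> \<le> G * \<theta>" using thp mult_right_mono[of gam G \<theta>] by (simp add: G_def)
    moreover have "\<theta> * (G + R) = G * \<theta> + \<theta> * R" by (simp add: algebra_simps)
    moreover have "R > Bc + q" by (simp add: R_def)
    moreover have "levy_psi gam s Lm \<theta> \<ge> - gam * \<theta> + s * \<theta>^2 / 2 + \<theta> * Af e - Bc"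
      unfolding Bc_def using psi_lower[of \<theta> e] thp e by simp
    moreover have "\<theta> * Af e \<ge> 0" using Af_nonneg[OF e(1)] thp by simp
    ultimately show "levy_psi gam s Lm \<theta> > q" by (simp only: mult_minus_left)
  qed
qed

end

theorem mainTheorem10:
  fixes gam s :: real and Lm :: "real measure" and q \<delta> \<rho> :: real
    and WW W :: "real \<Rightarrow> real"
  assumes triplet: "spos_levy_triplet gam s Lm"
    and mean: "finite_mean_triplet Lm"
    and notsub: "\<not> subordinator_triplet gam s Lm"
    and q: "q > 0" and \<delta>: "\<delta> > 0"
    and WW: "is_scale_function (levy_psi gam s Lm) q WW"
    and W: "is_scale_function (\<lambda>\<theta>. levy_psi gam s Lm \<theta> + \<delta> * \<theta>) q W"
  defines "d \<equiv> right_deriv0 (\<lambda>\<theta>. levy_psi gam s Lm \<theta> + \<delta> * \<theta>)"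
  defines "as \<equiv> astar q \<delta> \<rho> WW W d" and "bs \<equiv> bstar q \<delta> \<rho> WW W d"
  shows
    "(q * \<rho> / \<delta> < 1 \<longrightarrow>
        (\<forall>\<^sub>F \<beta> in at_right 0. bs \<beta> > 0) \<and> filterlim bs at_top (at_right 0)) \<and>
     (q * \<rho> / \<delta> > 1 \<longrightarrow>
        (\<forall>\<^sub>F \<beta> in at_right 0. as \<beta> = 0 \<and> bs \<beta> = 0)) \<and>
     (q * \<rho> / \<delta> = 1 \<and> d < 0 \<longrightarrow>
        (\<forall>\<beta>\<in>{0<..<1}. bs \<beta> > 0) \<and>
        (bs \<longlongrightarrow> the_inv_into {0..} (scaleZbar q W) (- d / q)) (at_right 0) \<and>
        (as \<longlongrightarrow> 0) (at_right 0)) \<and>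
     (q * \<rho> / \<delta> = 1 \<and> d \<ge> 0 \<longrightarrow>
        (\<forall>\<beta>\<in>{0<..<1}. as \<beta> = 0 \<and> bs \<beta> = 0))"
  proof -
  interpret lev gam s Lm using triplet by unfold_locales
  obtain \<theta>1 where \<theta>1: "\<theta>1 > 0" "\<And>\<theta>. \<theta> \<ge> \<theta>1 \<Longrightarrow> levy_psi gam s Lm \<theta> > q"
    using psi_big[OF notsub, of q] by blast
  have gWW: "goodW WW" unfolding goodW_def by (rule goodW_of_scale[OF WW \<theta>1])
  have big2: "(\<lambda>\<theta>. levy_psi gam s Lm \<theta> + \<delta> * \<theta>) \<theta> > q" if "\<theta> \<ge> \<theta>1" for \<theta>
  proof -
    have "\<delta> * \<theta> > 0" using \<delta> \<theta>1(1) that by simp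
    then show ?thesis using \<theta>1(2)[OF that] by simp
  qed
  have gW: "goodW W" unfolding goodW_def by (rule goodW_of_scale[OF W \<theta>1(1) big2])
  interpret core q \<delta> \<rho> d WW W using q \<delta> gW gWW by unfold_locales
  show ?thesis using core_main unfolding as_def bs_def .
qed

end
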